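(* Let $\mathcal{X}$ be an input space, let $\mathcal{Z}_k\subseteq\mathbb{R}^d$ be a feature space equipped with the Euclidean norm, and let $h_k:\mathcal{X}\to\mathcal{Z}_k$ be a measurable representation map. Let $f:\mathcal{X}\to[0,1]$ be a labeling function and let $f_k:\mathcal{Z}_k\to[0,1]$ be the induced feature-space target function $f_k(z)=\mathbb{E}[f(x)\mid h_k(x)=z]$. Let $\{\mathcal{D}_e\}_{e}$ be a family of distributions over $\mathcal{X}$ indexed by an environment variable $e$, let $\Pi_e\ge 0$ be a probability density over environments, let the target distribution be the mixture $\mathcal{T}=\int_e \Pi_e\,\mathcal{D}_e\,\mathsf{d}e$, and let the source distribution be the finite mixture $\mathcal{S}=\sum_{i=1}^{S}\Pi_i\,\mathcal{D}_{e_i}$ with $\Pi_i\ge 0$, $\sum_{i=1}^S\Pi_i=1$. Let $\mathcal{H}$ be a class of functions $\mathcal{Z}_k\to[0,1]$, each Lipschitz continuous with Lipschitz constant $L$, and suppose $f_k$ is $\lambda$-close to $\mathcal{H}$ for some $\lambda>0$, i.e. $\inf_{h\in\mathcal{H}}[\epsilon_{\mathcal{S}}(h,f_k)+\epsilon_{\mathcal{T}}(h,f_k)]\le\lambda$. Let $X=\{x_1,\dots,x_n\}$ be drawn i.i.d. from $\mathcal{S}$ and labeled according to $f$, and let $\delta\in(0,1)$. Then for any $h\in\mathcal{H}$, with probability at least $1-\delta$, $$\epsilon_{\mathcal{T}}(h)\le \hat{\epsilon}_{\mathcal{S}}(h)+2L\sum_{i=1}^{S}\Pi_i\int_e \Pi_e\,\mathcal{W}(\widetilde{\mathcal{D}}_{e_i},\widetilde{\mathcal{D}}_e)\,\mathsf{d}e+\lambda+2\hat{\mathcal{R}}_X(\mathcal{H}')+3\sqrt{\frac{\log(2/\delta)}{2n}},$$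 where $\hat{\epsilon}_{\mathcal{S}}(h)=\frac1n\sum_{i=1}^n|h(h_k(x_i))-f(x_i)|$ and $\mathcal{H}'=\{|h\circ h_k-f| : h\in\mathcal{H}\}$.
   Context: For a distribution $\mathcal{D}$ over $\mathcal{X}$, $\widetilde{\mathcal{D}}$ denotes the induced distribution over $\mathcal{Z}_k$, $\Pr_{\widetilde{\mathcal{D}}}(A)=\Pr_{\mathcal{D}}(h_k^{-1}(A))$; in particular $\widetilde{\mathcal{S}},\widetilde{\mathcal{T}}$ are the feature distributions of $\mathcal{S},\mathcal{T}$. For $g_1,g_2:\mathcal{Z}_k\to[0,1]$, $\epsilon_{\mathcal{D}}(g_1,g_2)=\mathbb{E}_{z\sim\widetilde{\mathcal{D}}}|g_1(z)-g_2(z)|$, and $\epsilon_{\mathcal{D}}(h):=\epsilon_{\mathcal{D}}(h,f_k)$. $\mathcal{W}(P_1,P_2)=\inf_{\gamma\in\Pi(P_1,P_2)}\mathbb{E}_{(x,y)\sim\gamma}\|x-y\|_2$ is the Wasserstein-1 distance, $\Pi(P_1,P_2)$ being the set of couplings. The empirical Rademacher complexity of a class $\mathcal{F}$ of real functions on $\mathcal{X}$ w.r.t. the sample $X$ is $\hat{\mathcal{R}}_X(\mathcal{F})=\mathbb{E}_{\sigma}\big[\sup_{g\in\mathcal{F}}\frac1n\sum_{i=1}^n\sigma_i g(x_i)\big]$ with $\sigma_1,\dots,\sigma_n$ independent uniform on $\{-1,1\}$. *)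

theory Defs
  imports "HOL-Probability.Probability"
begin

definition induced_dist :: "'x measure \<Rightarrow> ('x \<Rightarrow> 'z::euclidean_space) \<Rightarrow> 'z set \<Rightarrow> 'z measure" where
  "induced_dist D hk Zk = distr D (restrict_space borel Zk) hk"

definition feat_err :: "'z measure \<Rightarrow> ('z \<Rightarrow> real) \<Rightarrow> ('z \<Rightarrow> real) \<Rightarrow> real" where
  "feat_err Dt g1 g2 = (\<integral>z. \<bar>g1 z - g2 z\<bar> \<partial>Dt)"

definition couplings :: "'z measure \<Rightarrow> 'z measure \<Rightarrow> ('z \<times> 'z) measure set" where
  "couplings P Q = {\<gamma>. prob_space \<gamma> \<and> sets \<gamma> = sets (P \<Otimes>\<^sub>M Q)
       \<and> distr \<gamma> P fst = P \<and> distr \<gamma> Q snd = Q}"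

definition wasserstein1 :: "'z::real_normed_vector measure \<Rightarrow> 'z measure \<Rightarrow> ennreal" where
  "wasserstein1 P Q = (INF \<gamma>\<in>couplings P Q. \<integral>\<^sup>+ p. ennreal (norm (fst p - snd p)) \<partial>\<gamma>)"

definition env_mixture :: "'e measure \<Rightarrow> ('e \<Rightarrow> real) \<Rightarrow> ('e \<Rightarrow> 'x measure) \<Rightarrow> 'x measure \<Rightarrow> 'x measure" where
  "env_mixture E dens D M = measure_of (space M) (sets M)
      (\<lambda>A. \<integral>\<^sup>+ e. ennreal (dens e) * emeasure (D e) A \<partial>E)"

definition finite_mixture :: "nat \<Rightarrow> (nat \<Rightarrow> real) \<Rightarrow> (nat \<Rightarrow> 'e) \<Rightarrow> ('e \<Rightarrow> 'x measure) \<Rightarrow> 'x measure \<Rightarrow> 'x measure" where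
  "finite_mixture m w es D M = measure_of (space M) (sets M)
      (\<lambda>A. \<Sum>i<m. ennreal (w i) * emeasure (D (es i)) A)"

definition emp_rademacher :: "('x \<Rightarrow> real) set \<Rightarrow> (nat \<Rightarrow> 'x) \<Rightarrow> nat \<Rightarrow> real" where
  "emp_rademacher F xs n =
     (\<Sum>\<sigma>\<in>PiE {..<n} (\<lambda>_. {-1, 1::real}). (SUP g\<in>F. (\<Sum>i<n. \<sigma> i * g (xs i)) / real n)) / 2 ^ n"

end

theory Submission
  imports Defs
begin

lemma measure_of_as_bind:
  assumes K: "K \<in> measurable N (prob_algebra M)" and ne: "space N \<noteq> {}"
    and eq: "\<And>A. A \<in> sets M \<Longrightarrow> \<mu> A = emeasure (bind N K) A"
  shows "measure_of (space M) (sets M) \<mu> = bind N K"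
proof -
  have Ks: "K \<in> measurable N (subprob_algebra M)" using K by (rule measurable_prob_algebraD)
  have s: "sets (bind N K) = sets M" by (rule sets_bind_measurable[OF Ks ne])
  have sp: "space (bind N K) = space M" by (rule space_bind_measurable[OF Ks ne])
  have "bind N K = measure_of (space M) (sets M) (emeasure (bind N K))"
    using measure_of_of_measure[of "bind N K"] s sp by simp
  also have "\<dots> = measure_of (space M) (sets M) \<mu>"
    by (rule measure_of_eq) (auto simp: sets.space_closed eq sets.sigma_sets_eq)
  finally show ?thesis by simp
qed

lemma env_mixture_bind:
  assumes D_kernel: "D \<in> measurable E (prob_algebra M)"
    and Pe_meas: "Pe \<in> borel_measurable E"
    and Pe_density: "(\<integral>\<^sup>+ e. ennreal (Pe e) \<partial>E) = 1"
  shows "env_mixture E Pe D M = bind (density E (\<lambda>e. ennreal (Pe e))) D"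
proof -
  have ne: "space E \<noteq> {}" using Pe_density by (auto simp: nn_integral_empty)
  have K: "D \<in> measurable (density E (\<lambda>e. ennreal (Pe e))) (prob_algebra M)"
    using D_kernel by (simp cong: measurable_cong_sets)
  show ?thesis unfolding env_mixture_def
  proof (rule measure_of_as_bind[OF K])
    show "space (density E (\<lambda>e. ennreal (Pe e))) \<noteq> {}" using ne by simp
    fix A assume A: "A \<in> sets M"
    have m: "(\<lambda>e. emeasure (D e) A) \<in> borel_measurable E"
      using measurable_emeasure_subprob_algebra[OF A] measurable_prob_algebraD[OF D_kernel]
      by (rule measurable_compose[rotated])
    show "(\<integral>\<^sup>+ e. ennreal (Pe e) * emeasure (D e) A \<partial>E) = emeasure (density E (\<lambda>e. ennreal (Pe e)) \<bind> D) A"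
      using emeasure_bind[OF _ measurable_prob_algebraD[OF K] A] ne
        nn_integral_density[of "\<lambda>e. ennreal (Pe e)" E "\<lambda>e. emeasure (D e) A"] m Pe_meas
      by simp
  qed
qed

lemma finite_mixture_bind:
  assumes D_kernel: "D \<in> measurable E (prob_algebra M)"
    and es_in: "\<And>i. i < m \<Longrightarrow> es i \<in> space E"
    and m: "m > 0"
  shows "finite_mixture m w es D M = bind (density (count_space {..<m}) (\<lambda>i. ennreal (w i))) (\<lambda>i. D (es i))"
proof -
  have K: "(\<lambda>i. D (es i)) \<in> measurable (density (count_space {..<m}) (\<lambda>i. ennreal (w i))) (prob_algebra M)"
    using measurable_space[OF D_kernel] es_in
    by (auto simp: measurable_count_space_eq1 cong: measurable_cong_sets)
  show ?thesis unfolding finite_mixture_def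
  proof (rule measure_of_as_bind[OF K])
    show "space (density (count_space {..<m}) (\<lambda>i. ennreal (w i))) \<noteq> {}" using m by auto
    fix A assume A: "A \<in> sets M"
    show "(\<Sum>i<m. ennreal (w i) * emeasure (D (es i)) A) = emeasure (density (count_space {..<m}) (\<lambda>i. ennreal (w i)) \<bind> (\<lambda>i. D (es i))) A"
      using emeasure_bind[OF _ measurable_prob_algebraD[OF K] A] m lessThan_empty_iff[of m]
      by (auto simp: nn_integral_density nn_integral_count_space_finite)
  qed
qed


lemma ennreal_integral_le_nn_integral:
  fixes u :: "_ \<Rightarrow> real"
  shows "ennreal (integral\<^sup>L M u) \<le> (\<integral>\<^sup>+ x. ennreal (u x) \<partial>M)"
proof (cases "(\<integral>\<^sup>+ x. ennreal (u x) \<partial>M) = \<top>")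
  case False
  then obtain r where r: "(\<integral>\<^sup>+ x. ennreal (u x) \<partial>M) = ennreal r" "r \<ge> 0"
    by (metis ennreal_cases ennreal_enn2real_if enn2real_nonneg)
  then have "integral\<^sup>L M u \<le> r" by (intro integral_real_bounded) auto
  then show ?thesis using r by (simp add: ennreal_leI)
qed simp

lemma per_coupling:
  fixes Zk :: "'z::euclidean_space set" and G :: "'z \<Rightarrow> real"
  assumes g: "\<gamma> \<in> couplings P Q"
    and sP: "sets P = sets (restrict_space borel Zk)" and sQ: "sets Q = sets (restrict_space borel Zk)"
    and Gm: "G \<in> borel_measurable (restrict_space borel Zk)"
    and Gr: "\<And>z. z \<in> Zk \<Longrightarrow> G z \<in> {0..1}"
    and Gl: "c-lipschitz_on Zk G"
  shows "ennreal (integral\<^sup>L Q G - integral\<^sup>L P G) \<le> ennreal c * (\<integral>\<^sup>+ p. ennreal (norm (fst p - snd p)) \<partial>\<gamma>)"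
proof -
  from g have pg: "prob_space \<gamma>" and sg: "sets \<gamma> = sets (P \<Otimes>\<^sub>M Q)"
    and dP: "distr \<gamma> P fst = P" and dQ: "distr \<gamma> Q snd = Q"
    by (auto simp: couplings_def)
  interpret prob_space \<gamma> by fact
  have spP: "space P = Zk" using sets_eq_imp_space_eq[OF sP] by (simp add: space_restrict_space)
  have spQ: "space Q = Zk" using sets_eq_imp_space_eq[OF sQ] by (simp add: space_restrict_space)
  have spg: "space \<gamma> = Zk \<times> Zk" using sets_eq_imp_space_eq[OF sg] by (simp add: space_pair_measure spP spQ)
  have mfst: "fst \<in> measurable \<gamma> P" using measurable_fst[of P Q] by (simp cong: measurable_cong_sets add: sg)
  have msnd: "snd \<in> measurable \<gamma> Q" using measurable_snd[of P Q] by (simp cong: measurable_cong_sets add: sg)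
  have GP: "G \<in> borel_measurable P" using Gm by (simp cong: measurable_cong_sets add: sP)
  have GQ: "G \<in> borel_measurable Q" using Gm by (simp cong: measurable_cong_sets add: sQ)
  have a: "integral\<^sup>L Q G = (\<integral>p. G (snd p) \<partial>\<gamma>)"
    using integral_distr[OF msnd GQ] dQ by simp
  have b: "integral\<^sup>L P G = (\<integral>p. G (fst p) \<partial>\<gamma>)"
    using integral_distr[OF mfst GP] dP by simp
  have m1: "(\<lambda>p. G (fst p)) \<in> borel_measurable \<gamma>" using measurable_compose[OF mfst GP] .
  have m2: "(\<lambda>p. G (snd p)) \<in> borel_measurable \<gamma>" using measurable_compose[OF msnd GQ] .
  have i1: "integrable \<gamma> (\<lambda>p. G (fst p))"
    by (rule integrable_const_bound[where B=1]) (use Gr spg m1 in auto)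
  have i2: "integrable \<gamma> (\<lambda>p. G (snd p))"
    by (rule integrable_const_bound[where B=1]) (use Gr spg m2 in auto)
  have eq: "integral\<^sup>L Q G - integral\<^sup>L P G = (\<integral>p. G (snd p) - G (fst p) \<partial>\<gamma>)"
    using a b i1 i2 by simp
  have "ennreal (integral\<^sup>L Q G - integral\<^sup>L P G) \<le> (\<integral>\<^sup>+ p. ennreal (G (snd p) - G (fst p)) \<partial>\<gamma>)"
    unfolding eq by (rule ennreal_integral_le_nn_integral)
  also have "\<dots> \<le> (\<integral>\<^sup>+ p. ennreal c * ennreal (norm (fst p - snd p)) \<partial>\<gamma>)"
  proof (rule nn_integral_mono)
    fix p assume "p \<in> space \<gamma>"
    then have "fst p \<in> Zk" "snd p \<in> Zk" using spg by (auto simp: mem_Times_iff)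
    then have "dist (G (snd p)) (G (fst p)) \<le> c * dist (snd p) (fst p)"
      using lipschitz_onD[OF Gl] by blast
    then have "G (snd p) - G (fst p) \<le> c * norm (fst p - snd p)"
      by (simp add: dist_real_def dist_norm norm_minus_commute)
    then show "ennreal (G (snd p) - G (fst p)) \<le> ennreal c * ennreal (norm (fst p - snd p))"
      using lipschitz_on_nonneg[OF Gl] by (simp add: ennreal_mult[symmetric] ennreal_leI)
  qed
  also have "\<dots> = ennreal c * (\<integral>\<^sup>+ p. ennreal (norm (fst p - snd p)) \<partial>\<gamma>)"
  proof (rule nn_integral_cmult)
    have "fst \<in> measurable \<gamma> (restrict_space borel Zk)"
      using mfst measurable_cong_sets[OF refl sP, of \<gamma>] by simp
    then have "fst \<in> measurable \<gamma> borel"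
      using measurable_compose[OF _ measurable_restrict_space1[OF measurable_id]] by blast
    moreover have "snd \<in> measurable \<gamma> (restrict_space borel Zk)"
      using msnd measurable_cong_sets[OF refl sQ, of \<gamma>] by simp
    then have "snd \<in> measurable \<gamma> borel"
      using measurable_compose[OF _ measurable_restrict_space1[OF measurable_id]] by blast
    ultimately show "(\<lambda>p. ennreal (norm (fst p - snd p))) \<in> borel_measurable \<gamma>" by measurable
  qed
  finally show ?thesis .
qed


lemma W_bound:
  fixes Zk :: "'z::euclidean_space set" and G :: "'z \<Rightarrow> real"
  assumes sP: "sets P = sets (restrict_space borel Zk)" and sQ: "sets Q = sets (restrict_space borel Zk)"
    and pP: "prob_space P" and pQ: "prob_space Q"
    and Gm: "G \<in> borel_measurable (restrict_space borel Zk)"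
    and Gr: "\<And>z. z \<in> Zk \<Longrightarrow> G z \<in> {0..1}"
    and Gl: "c-lipschitz_on Zk G"
  shows "ennreal (integral\<^sup>L Q G - integral\<^sup>L P G) \<le> ennreal c * wasserstein1 P Q"
proof (cases "c = 0")
  case True
  have spP: "space P = Zk" using sets_eq_imp_space_eq[OF sP] by (simp add: space_restrict_space)
  have spQ: "space Q = Zk" using sets_eq_imp_space_eq[OF sQ] by (simp add: space_restrict_space)
  obtain z0 where z0: "z0 \<in> Zk" using prob_space.not_empty[OF pP] spP by auto
  have const: "G z = G z0" if "z \<in> Zk" for z
    using lipschitz_onD[OF Gl that z0] True by simp
  have "integral\<^sup>L Q G = integral\<^sup>L Q (\<lambda>_. G z0)"
    by (rule Bochner_Integration.integral_cong) (auto simp: spQ const)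
  also have "\<dots> = G z0" using prob_space.prob_space[OF pQ] by simp
  finally have a: "integral\<^sup>L Q G = G z0" .
  have "integral\<^sup>L P G = integral\<^sup>L P (\<lambda>_. G z0)"
    by (rule Bochner_Integration.integral_cong) (auto simp: spP const)
  also have "\<dots> = G z0" using prob_space.prob_space[OF pP] by simp
  finally have b: "integral\<^sup>L P G = G z0" .
  show ?thesis using a b by simp
next
  case False
  then have c: "c > 0" using lipschitz_on_nonneg[OF Gl] by simp
  define d where "d = integral\<^sup>L Q G - integral\<^sup>L P G"
  have eq: "ennreal d = ennreal c * ennreal (d / c)"
  proof (cases "d \<ge> 0")
    case True then show ?thesis using c by (simp add: ennreal_mult[symmetric])
  next
    case False then show ?thesis using c
      by (simp add: ennreal_neg divide_neg_pos less_imp_le)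
  qed
  have "ennreal (d / c) \<le> wasserstein1 P Q"
    unfolding wasserstein1_def
  proof (rule INF_greatest)
    fix \<gamma> assume g: "\<gamma> \<in> couplings P Q"
    have "ennreal c * ennreal (d / c) \<le> ennreal c * (\<integral>\<^sup>+ p. ennreal (norm (fst p - snd p)) \<partial>\<gamma>)"
      using per_coupling[OF g sP sQ Gm Gr Gl] eq d_def by simp
    then show "ennreal (d / c) \<le> (\<integral>\<^sup>+ p. ennreal (norm (fst p - snd p)) \<partial>\<gamma>)"
      using c by (subst (asm) ennreal_mult_le_mult_iff) auto
  qed
  then have "ennreal c * ennreal (d / c) \<le> ennreal c * wasserstein1 P Q"
    by (rule mult_left_mono) simp
  then show ?thesis using eq d_def by simp
qed


lemma nn_integral_le_cmult:
  assumes fm: "f \<in> borel_measurable N" and c: "c \<ge> 0"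
    and le: "\<And>x. x \<in> space N \<Longrightarrow> f x \<le> ennreal c * g x"
  shows "integral\<^sup>N N f \<le> ennreal c * integral\<^sup>N N g"
proof (cases "c = 0")
  case True
  then have "integral\<^sup>N N f = integral\<^sup>N N (\<lambda>_. 0)"
    using le by (intro nn_integral_cong) auto
  then show ?thesis by simp
next
  case False
  then have c: "c > 0" using c by simp
  have eq1: "ennreal c * ennreal (1/c) = 1" using c by (simp add: ennreal_mult[symmetric])
  have "integral\<^sup>N N f = integral\<^sup>N N (\<lambda>x. ennreal c * (ennreal (1/c) * f x))"
    by (simp add: mult.assoc[symmetric] eq1)
  also have "\<dots> = ennreal c * integral\<^sup>N N (\<lambda>x. ennreal (1/c) * f x)"
    using fm by (intro nn_integral_cmult) measurable
  also have "\<dots> \<le> ennreal c * integral\<^sup>N N g"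
  proof (intro mult_left_mono nn_integral_mono)
    fix x assume "x \<in> space N"
    then have "ennreal (1/c) * f x \<le> ennreal (1/c) * (ennreal c * g x)"
      using le by (intro mult_left_mono) auto
    also have "\<dots> = g x" using eq1 by (simp add: mult.assoc[symmetric] mult.commute)
    finally show "ennreal (1/c) * f x \<le> g x" .
  qed simp
  finally show ?thesis .
qed

lemma induced_int:
  fixes Zk :: "'z::euclidean_space set" and G :: "'z \<Rightarrow> real"
  assumes s: "sets \<mu> = sets M" and p: "prob_space \<mu>"
    and hkK: "hk \<in> measurable M (restrict_space borel Zk)"
    and Gm: "G \<in> borel_measurable (restrict_space borel Zk)"
    and Gr: "\<And>z. z \<in> Zk \<Longrightarrow> G z \<in> {0..1}"
  shows "ennreal (integral\<^sup>L (induced_dist \<mu> hk Zk) G) = (\<integral>\<^sup>+ x. ennreal (G (hk x)) \<partial>\<mu>)"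
    and "integral\<^sup>L (induced_dist \<mu> hk Zk) G \<in> {0..1}"
    and "prob_space (induced_dist \<mu> hk Zk)"
    and "sets (induced_dist \<mu> hk Zk) = sets (restrict_space borel Zk)"
proof -
  have hk: "hk \<in> measurable \<mu> (restrict_space borel Zk)" using hkK by (simp cong: measurable_cong_sets add: s)
  interpret P: prob_space "induced_dist \<mu> hk Zk" unfolding induced_dist_def
    by (rule prob_space.prob_space_distr[OF p hk])
  show "prob_space (induced_dist \<mu> hk Zk)" by unfold_locales
  show ss: "sets (induced_dist \<mu> hk Zk) = sets (restrict_space borel Zk)" by (simp add: induced_dist_def)
  have sp: "space (induced_dist \<mu> hk Zk) = Zk" using sets_eq_imp_space_eq[OF ss] by (simp add: space_restrict_space)
  have GP: "G \<in> borel_measurable (induced_dist \<mu> hk Zk)" using Gm by (simp cong: measurable_cong_sets add: ss)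
  have int: "integrable (induced_dist \<mu> hk Zk) G"
    by (rule P.integrable_const_bound[where B=1]) (use Gr sp GP in auto)
  have "ennreal (integral\<^sup>L (induced_dist \<mu> hk Zk) G) = (\<integral>\<^sup>+ z. ennreal (G z) \<partial>induced_dist \<mu> hk Zk)"
    by (rule nn_integral_eq_integral[symmetric]) (use int Gr sp in auto)
  also have "\<dots> = (\<integral>\<^sup>+ x. ennreal (G (hk x)) \<partial>\<mu>)"
    unfolding induced_dist_def by (rule nn_integral_distr[OF hk]) (use Gm in measurable)
  finally show "ennreal (integral\<^sup>L (induced_dist \<mu> hk Zk) G) = (\<integral>\<^sup>+ x. ennreal (G (hk x)) \<partial>\<mu>)" .
  have "integral\<^sup>L (induced_dist \<mu> hk Zk) G \<ge> 0" using Gr sp by (intro integral_nonneg_AE) auto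
  moreover have "integral\<^sup>L (induced_dist \<mu> hk Zk) G \<le> integral\<^sup>L (induced_dist \<mu> hk Zk) (\<lambda>_. 1)"
    by (rule integral_mono[OF int]) (use Gr sp in auto)
  ultimately show "integral\<^sup>L (induced_dist \<mu> hk Zk) G \<in> {0..1}" by (simp add: P.prob_space)
qed


lemma mixtures_basic:
  assumes D_kernel: "D \<in> measurable E (prob_algebra M)"
    and Pe_meas: "Pe \<in> borel_measurable E"
    and Pe_nonneg': "\<forall>e \<in> space E. Pe e \<ge> 0"
    and Pe_density: "(\<integral>\<^sup>+ e. ennreal (Pe e) \<partial>E) = 1"
    and es_in': "\<forall>i<m. es i \<in> space E"
    and w_nonneg': "\<forall>i<m. w i \<ge> 0"
    and w_sum: "(\<Sum>i<m. w i) = 1"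
  shows "sets (env_mixture E Pe D M) = sets M" "prob_space (env_mixture E Pe D M)"
    "sets (finite_mixture m w es D M) = sets M" "prob_space (finite_mixture m w es D M)"
    "\<And>u. u \<in> borel_measurable M \<Longrightarrow> (\<integral>\<^sup>+ x. u x \<partial>env_mixture E Pe D M) = (\<integral>\<^sup>+ e. ennreal (Pe e) * (\<integral>\<^sup>+ x. u x \<partial>D e) \<partial>E)"
    "\<And>u. u \<in> borel_measurable M \<Longrightarrow> (\<integral>\<^sup>+ x. u x \<partial>finite_mixture m w es D M) = (\<Sum>i<m. ennreal (w i) * (\<integral>\<^sup>+ x. u x \<partial>D (es i)))"
proof -
  have es_in: "\<And>i. i < m \<Longrightarrow> es i \<in> space E" and w_nonneg: "\<And>i. i < m \<Longrightarrow> w i \<ge> 0"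
    using es_in' w_nonneg' by auto
  have m: "m > 0" using w_sum by (cases m) auto
  define N where "N = density E (\<lambda>e. ennreal (Pe e))"
  define N' where "N' = density (count_space {..<m}) (\<lambda>i. ennreal (w i))"
  have TB: "env_mixture E Pe D M = bind N D" unfolding N_def by (rule env_mixture_bind[OF D_kernel Pe_meas Pe_density])
  have SB: "finite_mixture m w es D M = bind N' (\<lambda>i. D (es i))" unfolding N'_def by (rule finite_mixture_bind[OF D_kernel es_in m])
  have K: "D \<in> measurable N (prob_algebra M)"
    using D_kernel by (simp add: N_def cong: measurable_cong_sets)
  have KE': "(\<lambda>i. D (es i)) \<in> measurable (count_space {..<m}) (prob_algebra M)"
    using measurable_space[OF D_kernel] es_in by (auto simp: measurable_count_space_eq1)
  have K': "(\<lambda>i. D (es i)) \<in> measurable N' (prob_algebra M)"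
    using KE' measurable_cong_sets[of N' "count_space {..<m}" "prob_algebra M" "prob_algebra M"]
    by (simp add: N'_def)
  have pN: "prob_space N"
    by (rule prob_spaceI) (use Pe_meas Pe_density in \<open>simp add: N_def emeasure_density\<close>)
  have pN': "prob_space N'"
  proof (rule prob_spaceI)
    have "emeasure N' (space N') = (\<Sum>i<m. ennreal (w i))"
      by (simp add: N'_def emeasure_density nn_integral_count_space_finite)
    also have "\<dots> = ennreal (\<Sum>i<m. w i)" using w_nonneg by (intro sum_ennreal) auto
    also have "\<dots> = 1" using w_sum by simp
    finally show "emeasure N' (space N') = 1" .
  qed
  have NA: "N \<in> space (prob_algebra E)" using pN by (simp add: space_prob_algebra N_def)
  have KE: "D \<in> measurable E (prob_algebra M)" by (rule D_kernel)
  have NA': "N' \<in> space (prob_algebra (count_space {..<m}))" using pN' by (simp add: space_prob_algebra N'_def)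
  show "sets (env_mixture E Pe D M) = sets M" unfolding TB by (rule sets_bind'[OF NA KE])
  show "prob_space (env_mixture E Pe D M)" unfolding TB by (rule prob_space_bind'[OF NA KE])
  show "sets (finite_mixture m w es D M) = sets M" unfolding SB by (rule sets_bind'[OF NA' KE'])
  show "prob_space (finite_mixture m w es D M)" unfolding SB by (rule prob_space_bind'[OF NA' KE'])
  fix u :: "_ \<Rightarrow> ennreal" assume u: "u \<in> borel_measurable M"
  have um: "(\<lambda>e. \<integral>\<^sup>+ x. u x \<partial>D e) \<in> borel_measurable E"
    using measurable_compose[OF measurable_prob_algebraD[OF D_kernel] nn_integral_measurable_subprob_algebra[OF u]] .
  show "(\<integral>\<^sup>+ x. u x \<partial>env_mixture E Pe D M) = (\<integral>\<^sup>+ e. ennreal (Pe e) * (\<integral>\<^sup>+ x. u x \<partial>D e) \<partial>E)"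
    unfolding TB nn_integral_bind[OF u measurable_prob_algebraD[OF K]]
    unfolding N_def using um Pe_meas by (simp add: nn_integral_density)
  show "(\<integral>\<^sup>+ x. u x \<partial>finite_mixture m w es D M) = (\<Sum>i<m. ennreal (w i) * (\<integral>\<^sup>+ x. u x \<partial>D (es i)))"
    unfolding SB nn_integral_bind[OF u measurable_prob_algebraD[OF K']]
    unfolding N'_def by (simp add: nn_integral_density nn_integral_count_space_finite)
qed


lemma mixture_W:
  fixes Zk :: "'z::euclidean_space set" and G :: "'z \<Rightarrow> real"
  assumes D_kernel: "D \<in> measurable E (prob_algebra M)"
    and Pe_meas: "Pe \<in> borel_measurable E"
    and Pe_nonneg: "\<And>e. e \<in> space E \<Longrightarrow> Pe e \<ge> 0"
    and Pe_density: "(\<integral>\<^sup>+ e. ennreal (Pe e) \<partial>E) = 1"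
    and es_in: "\<And>i. i < m \<Longrightarrow> es i \<in> space E"
    and w_nonneg: "\<And>i. i < m \<Longrightarrow> w i \<ge> 0"
    and w_sum: "(\<Sum>i<m. w i) = 1"
    and hkK: "hk \<in> measurable M (restrict_space borel Zk)"
    and Gm: "G \<in> borel_measurable (restrict_space borel Zk)"
    and Gr: "\<And>z. z \<in> Zk \<Longrightarrow> G z \<in> {0..1}"
    and Gl: "c-lipschitz_on Zk G"
  shows "ennreal (integral\<^sup>L (induced_dist (env_mixture E Pe D M) hk Zk) G)
    \<le> ennreal (integral\<^sup>L (induced_dist (finite_mixture m w es D M) hk Zk) G)
      + ennreal c * (\<Sum>i<m. ennreal (w i) *
          (\<integral>\<^sup>+ e. ennreal (Pe e) * wasserstein1 (induced_dist (D (es i)) hk Zk) (induced_dist (D e) hk Zk) \<partial>E))"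
proof -
  have Pe_nonneg': "\<forall>e \<in> space E. Pe e \<ge> 0" and es_in': "\<forall>i<m. es i \<in> space E" and w_nonneg': "\<forall>i<m. w i \<ge> 0"
    using Pe_nonneg es_in w_nonneg by auto
  note mb = mixtures_basic[OF D_kernel Pe_meas Pe_nonneg' Pe_density es_in' w_nonneg' w_sum]
  have c0: "c \<ge> 0" using lipschitz_on_nonneg[OF Gl] .
  have um: "(\<lambda>x. ennreal (G (hk x))) \<in> borel_measurable M"
    using measurable_compose[OF hkK Gm] by measurable
  define A where "A e = (\<integral>\<^sup>+ x. ennreal (G (hk x)) \<partial>D e)" for e
  define a where "a e = enn2real (A e)" for e
  define W where "W i e = wasserstein1 (induced_dist (D (es i)) hk Zk) (induced_dist (D e) hk Zk)" for i e
  have Am: "A \<in> borel_measurable E" unfolding A_def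
    using measurable_compose[OF measurable_prob_algebraD[OF D_kernel] nn_integral_measurable_subprob_algebra[OF um]] .
  have am: "a \<in> borel_measurable E" unfolding a_def using Am by measurable
  have De: "sets (D e) = sets M" "prob_space (D e)" if "e \<in> space E" for e
    using measurable_space[OF D_kernel that] by (auto simp: space_prob_algebra)
  have Ae: "ennreal (integral\<^sup>L (induced_dist (D e) hk Zk) G) = A e"
    and ae: "integral\<^sup>L (induced_dist (D e) hk Zk) G = a e"
    and a01: "a e \<in> {0..1}"
    and pe: "prob_space (induced_dist (D e) hk Zk)"
    and se: "sets (induced_dist (D e) hk Zk) = sets (restrict_space borel Zk)"
    if "e \<in> space E" for e
  proof -
    note ii = induced_int[OF De[OF that] hkK Gm Gr]
    show 1: "ennreal (integral\<^sup>L (induced_dist (D e) hk Zk) G) = A e" using ii(1) by (simp add: A_def)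
    show 2: "integral\<^sup>L (induced_dist (D e) hk Zk) G = a e"
      using ii(2) 1 by (simp add: a_def 1[symmetric])
    show "a e \<in> {0..1}" using ii(2) 2 by simp
    show "prob_space (induced_dist (D e) hk Zk)" by (rule ii(3))
    show "sets (induced_dist (D e) hk Zk) = sets (restrict_space borel Zk)" by (rule ii(4))
  qed
  have Aa: "A e = ennreal (a e)" if "e \<in> space E" for e using Ae[OF that] ae[OF that] by simp
  have Wb: "ennreal (a e - a (es i)) \<le> ennreal c * W i e" if "e \<in> space E" "i < m" for e i
    using W_bound[OF se[OF es_in[OF that(2)]] se[OF that(1)] pe[OF es_in[OF that(2)]] pe[OF that(1)] Gm Gr Gl]
    by (simp add: W_def ae[OF that(1)] ae[OF es_in[OF that(2)]])
  define f where "f i e = ennreal (Pe e) * ennreal (a e - a (es i))" for i e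
  have fm: "f i \<in> borel_measurable E" for i unfolding f_def using am Pe_meas by measurable
  have fb: "integral\<^sup>N E (f i) \<le> ennreal c * (\<integral>\<^sup>+ e. ennreal (Pe e) * W i e \<partial>E)" if "i < m" for i
  proof (rule nn_integral_le_cmult[OF fm c0])
    fix e assume e: "e \<in> space E"
    have "f i e \<le> ennreal (Pe e) * (ennreal c * W i e)"
      unfolding f_def by (rule mult_left_mono[OF Wb[OF e that]]) simp
    then show "f i e \<le> ennreal c * (ennreal (Pe e) * W i e)" by (simp add: ac_simps)
  qed
  define B where "B = (\<Sum>i<m. w i * a (es i))"
  have B0: "B \<ge> 0" unfolding B_def using w_nonneg a01 es_in by (intro sum_nonneg) auto
  have pt: "ennreal (Pe e) * A e \<le> ennreal (Pe e) * ennreal B + (\<Sum>i<m. ennreal (w i) * f i e)"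
    if e: "e \<in> space E" for e
  proof -
    have "a e = (\<Sum>i<m. w i * a e)" using w_sum by (simp add: sum_distrib_right[symmetric])
    also have "\<dots> = B + (\<Sum>i<m. w i * (a e - a (es i)))"
      by (simp add: B_def sum.distrib[symmetric] algebra_simps)
    also have "\<dots> \<le> B + (\<Sum>i<m. w i * max 0 (a e - a (es i)))"
      using w_nonneg by (intro add_left_mono sum_mono mult_left_mono) auto
    finally have r: "a e \<le> B + (\<Sum>i<m. w i * max 0 (a e - a (es i)))" .
    have "ennreal (a e) \<le> ennreal (B + (\<Sum>i<m. w i * max 0 (a e - a (es i))))"
      using r by (rule ennreal_leI)
    also have "\<dots> = ennreal B + (\<Sum>i<m. ennreal (w i * max 0 (a e - a (es i))))"
    proof -
      have nn: "0 \<le> w i * max 0 (a e - a (es i))" if "i \<in> {..<m}" for i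
        using w_nonneg that by simp
      have "ennreal (B + (\<Sum>i<m. w i * max 0 (a e - a (es i)))) = ennreal B + ennreal (\<Sum>i<m. w i * max 0 (a e - a (es i)))"
        using B0 nn by (intro ennreal_plus sum_nonneg) auto
      also have "ennreal (\<Sum>i<m. w i * max 0 (a e - a (es i))) = (\<Sum>i<m. ennreal (w i * max 0 (a e - a (es i))))"
        using nn by (intro sum_ennreal[symmetric]) auto
      finally show ?thesis .
    qed
    also have "\<dots> = ennreal B + (\<Sum>i<m. ennreal (w i) * ennreal (a e - a (es i)))"
    proof -
      have "ennreal (w i * max 0 (a e - a (es i))) = ennreal (w i) * ennreal (a e - a (es i))" if "i < m" for i
        using w_nonneg[OF that] by (cases "a e - a (es i) \<ge> 0") (auto simp: ennreal_mult ennreal_neg)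
      then show ?thesis by simp
    qed
    finally have "A e \<le> ennreal B + (\<Sum>i<m. ennreal (w i) * ennreal (a e - a (es i)))"
      using Aa[OF e] by simp
    then have "ennreal (Pe e) * A e \<le> ennreal (Pe e) * (ennreal B + (\<Sum>i<m. ennreal (w i) * ennreal (a e - a (es i))))"
      by (rule mult_left_mono) simp
    also have "\<dots> = ennreal (Pe e) * ennreal B + (\<Sum>i<m. ennreal (w i) * f i e)"
      by (simp add: f_def distrib_left sum_distrib_left ac_simps)
    finally show ?thesis .
  qed
  have "ennreal (integral\<^sup>L (induced_dist (env_mixture E Pe D M) hk Zk) G) = (\<integral>\<^sup>+ x. ennreal (G (hk x)) \<partial>env_mixture E Pe D M)"
    using induced_int(1)[OF mb(1,2) hkK Gm Gr] .
  also have "\<dots> = (\<integral>\<^sup>+ e. ennreal (Pe e) * A e \<partial>E)" unfolding A_def by (rule mb(5)[OF um])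
  also have "\<dots> \<le> (\<integral>\<^sup>+ e. ennreal (Pe e) * ennreal B + (\<Sum>i<m. ennreal (w i) * f i e) \<partial>E)"
    by (rule nn_integral_mono) (rule pt)
  also have "\<dots> = (\<integral>\<^sup>+ e. ennreal (Pe e) * ennreal B \<partial>E) + (\<Sum>i<m. \<integral>\<^sup>+ e. ennreal (w i) * f i e \<partial>E)"
    using fm Pe_meas by (subst nn_integral_add) (auto intro!: nn_integral_sum)
  also have "\<dots> = ennreal B + (\<Sum>i<m. ennreal (w i) * integral\<^sup>N E (f i))"
    using fm Pe_meas Pe_density by (simp add: nn_integral_cmult nn_integral_multc)
  also have "\<dots> \<le> ennreal B + (\<Sum>i<m. ennreal (w i) * (ennreal c * (\<integral>\<^sup>+ e. ennreal (Pe e) * W i e \<partial>E)))"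
    using fb by (intro add_left_mono sum_mono mult_left_mono) auto
  also have "\<dots> = ennreal B + ennreal c * (\<Sum>i<m. ennreal (w i) * (\<integral>\<^sup>+ e. ennreal (Pe e) * W i e \<partial>E))"
    by (simp add: sum_distrib_left ac_simps)
  also have "ennreal B = ennreal (integral\<^sup>L (induced_dist (finite_mixture m w es D M) hk Zk) G)"
  proof -
    have "ennreal (integral\<^sup>L (induced_dist (finite_mixture m w es D M) hk Zk) G) = (\<integral>\<^sup>+ x. ennreal (G (hk x)) \<partial>finite_mixture m w es D M)"
      using induced_int(1)[OF mb(3,4) hkK Gm Gr] .
    also have "\<dots> = (\<Sum>i<m. ennreal (w i) * A (es i))" unfolding A_def by (rule mb(6)[OF um])
    also have "\<dots> = (\<Sum>i<m. ennreal (w i * a (es i)))"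
      using Aa es_in w_nonneg a01 by (intro sum.cong) (auto simp: ennreal_mult)
    also have "\<dots> = ennreal B" unfolding B_def using w_nonneg a01 es_in by (intro sum_ennreal) auto
    finally show ?thesis by simp
  qed
  finally show ?thesis unfolding W_def .
qed


lemma condexp_bound:
  fixes Zk :: "'z::euclidean_space set" and h fk :: "'z \<Rightarrow> real"
  assumes pS: "prob_space S" and sS: "sets S = sets M"
    and hkK: "hk \<in> measurable M (restrict_space borel Zk)"
    and fm: "f \<in> borel_measurable M" and fr: "\<And>x. x \<in> space M \<Longrightarrow> f x \<in> {0..1}"
    and fkm: "fk \<in> borel_measurable (restrict_space borel Zk)" and fkr: "\<And>z. z \<in> Zk \<Longrightarrow> fk z \<in> {0..1}"
    and hm: "h \<in> borel_measurable (restrict_space borel Zk)" and hr: "\<And>z. z \<in> Zk \<Longrightarrow> h z \<in> {0..1}"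
    and hk_Zk: "\<And>x. x \<in> space M \<Longrightarrow> hk x \<in> Zk"
    and ce: "\<And>A. A \<in> sets (restrict_space borel Zk) \<Longrightarrow>
        (\<integral>x\<in>hk -` A \<inter> space M. f x \<partial>S) = (\<integral>x\<in>hk -` A \<inter> space M. fk (hk x) \<partial>S)"
  shows "feat_err (induced_dist S hk Zk) h fk \<le> (\<integral>x. \<bar>h (hk x) - f x\<bar> \<partial>S)"
proof -
  interpret prob_space S by fact
  have spS: "space S = space M" using sets_eq_imp_space_eq[OF sS] .
  have spK: "space (restrict_space borel Zk) = Zk" by (simp add: space_restrict_space)
  have hkS[measurable]: "hk \<in> measurable S (restrict_space borel Zk)" using hkK by (simp cong: measurable_cong_sets add: sS)
  have fS[measurable]: "f \<in> borel_measurable S" using fm by (simp cong: measurable_cong_sets add: sS)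
  note [measurable] = hm fkm
  define Ap where "Ap = {z \<in> space (restrict_space borel Zk). fk z \<le> h z}"
  define Am where "Am = {z \<in> space (restrict_space borel Zk). \<not> fk z \<le> h z}"
  have Ap[measurable]: "Ap \<in> sets (restrict_space borel Zk)" unfolding Ap_def by measurable
  have Am[measurable]: "Am \<in> sets (restrict_space borel Zk)" unfolding Am_def by measurable
  define P where "P = hk -` Ap \<inter> space M"
  define Q where "Q = hk -` Am \<inter> space M"
  have P[measurable]: "P \<in> sets S" unfolding P_def spS[symmetric] by measurable
  have Q[measurable]: "Q \<in> sets S" unfolding Q_def spS[symmetric] by measurable
  define u where "u x = h (hk x)" for x
  define v where "v x = fk (hk x)" for x
  have um[measurable]: "u \<in> borel_measurable S" unfolding u_def by measurable
  have vm[measurable]: "v \<in> borel_measurable S" unfolding v_def by measurable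
  have ur: "u x \<in> {0..1}" "v x \<in> {0..1}" "f x \<in> {0..1}" if "x \<in> space S" for x
    using that hr fkr fr hk_Zk spS by (auto simp: u_def v_def)
  have bnd: "integrable S g" if "g \<in> borel_measurable S" "\<And>x. x \<in> space S \<Longrightarrow> \<bar>g x\<bar> \<le> 2" for g :: "_ \<Rightarrow> real"
  proof -
    have "AE x in S. norm (g x) \<le> 2" using that by auto
    then show ?thesis using that(1) by (rule integrable_const_bound)
  qed
  have iPu: "integrable S (\<lambda>x. indicator P x * u x)" by (rule bnd) (auto simp: indicator_def dest: ur)
  have iPv: "integrable S (\<lambda>x. indicator P x * v x)" by (rule bnd) (auto simp: indicator_def dest: ur)
  have iPf: "integrable S (\<lambda>x. indicator P x * f x)" by (rule bnd) (auto simp: indicator_def dest: ur)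
  have iQu: "integrable S (\<lambda>x. indicator Q x * u x)" by (rule bnd) (auto simp: indicator_def dest: ur)
  have iQv: "integrable S (\<lambda>x. indicator Q x * v x)" by (rule bnd) (auto simp: indicator_def dest: ur)
  have iQf: "integrable S (\<lambda>x. indicator Q x * f x)" by (rule bnd) (auto simp: indicator_def dest: ur)
  have iuf: "integrable S (\<lambda>x. \<bar>u x - f x\<bar>)" by (rule bnd) (use ur in force)+
  have cP: "(\<integral>x. indicator P x * f x \<partial>S) = (\<integral>x. indicator P x * v x \<partial>S)"
    using ce[OF Ap] by (simp add: set_lebesgue_integral_def P_def v_def)
  have cQ: "(\<integral>x. indicator Q x * f x \<partial>S) = (\<integral>x. indicator Q x * v x \<partial>S)"
    using ce[OF Am] by (simp add: set_lebesgue_integral_def Q_def v_def)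
  have split: "\<bar>u x - v x\<bar> = indicator P x * u x - indicator P x * v x + (indicator Q x * v x - indicator Q x * u x)"
    if "x \<in> space S" for x
    using that hk_Zk[of x] spS by (auto simp: P_def Q_def Ap_def Am_def u_def v_def spK indicator_def)
  have split2: "indicator P x * u x - indicator P x * f x + (indicator Q x * f x - indicator Q x * u x) \<le> \<bar>u x - f x\<bar>"
    if "x \<in> space S" for x
    using that hk_Zk[of x] spS by (auto simp: P_def Q_def Ap_def Am_def u_def v_def spK indicator_def)
  have "feat_err (induced_dist S hk Zk) h fk = (\<integral>x. \<bar>u x - v x\<bar> \<partial>S)"
    unfolding feat_err_def induced_dist_def u_def v_def by (rule integral_distr) (use hkS in measurable)
  also have "\<dots> = (\<integral>x. indicator P x * u x - indicator P x * v x + (indicator Q x * v x - indicator Q x * u x) \<partial>S)"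
    by (rule Bochner_Integration.integral_cong) (auto simp: split)
  also have "\<dots> = (\<integral>x. indicator P x * u x \<partial>S) - (\<integral>x. indicator P x * v x \<partial>S) + ((\<integral>x. indicator Q x * v x \<partial>S) - (\<integral>x. indicator Q x * u x \<partial>S))"
    using iPu iPv iQu iQv by simp
  also have "\<dots> = (\<integral>x. indicator P x * u x \<partial>S) - (\<integral>x. indicator P x * f x \<partial>S) + ((\<integral>x. indicator Q x * f x \<partial>S) - (\<integral>x. indicator Q x * u x \<partial>S))"
    using cP cQ by simp
  also have "\<dots> = (\<integral>x. indicator P x * u x - indicator P x * f x + (indicator Q x * f x - indicator Q x * u x) \<partial>S)"
    using iPu iPf iQu iQf by simp
  also have "\<dots> \<le> (\<integral>x. \<bar>u x - f x\<bar> \<partial>S)"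
    by (rule integral_mono[OF _ iuf]) (use iPu iPf iQu iQf split2 in auto)
  finally show ?thesis by (simp add: u_def)
qed


lemma emp_rademacher_nonneg:
  assumes g0: "g0 \<in> F" and bd: "\<And>g i. g \<in> F \<Longrightarrow> i < n \<Longrightarrow> \<bar>g (xs i)\<bar> \<le> 1" and n: "n \<ge> 1"
  shows "emp_rademacher F xs n \<ge> 0"
proof -
  define Sig where "Sig = PiE {..<n} (\<lambda>_. {-1, 1::real})"
  define a where "a \<sigma> g = (\<Sum>i<n. \<sigma> i * g (xs i)) / real n" for \<sigma> :: "nat \<Rightarrow> real" and g
  define \<Phi> where "\<Phi> \<sigma> = (SUP g\<in>F. a \<sigma> g)" for \<sigma>
  define \<nu> where "\<nu> \<sigma> = restrict (\<lambda>i. - \<sigma> i) {..<n}" for \<sigma> :: "nat \<Rightarrow> real"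
  have fin: "finite Sig" unfolding Sig_def by (intro finite_PiE) auto
  have abound: "a \<sigma> g \<le> 1" if "\<sigma> \<in> Sig" "g \<in> F" for \<sigma> g
  proof -
    have "(\<Sum>i<n. \<sigma> i * g (xs i)) \<le> (\<Sum>i<n. 1)"
    proof (intro sum_mono)
      fix i assume i: "i \<in> {..<n}"
      have "\<sigma> i \<in> {-1, 1}" using that(1) i by (auto simp: Sig_def PiE_iff)
      then have "\<bar>\<sigma> i * g (xs i)\<bar> \<le> 1" using bd[OF that(2)] i by (auto simp: abs_mult)
      then show "\<sigma> i * g (xs i) \<le> 1" by simp
    qed
    then show ?thesis using n by (simp add: a_def divide_le_eq)
  qed
  have bdd: "bdd_above (a \<sigma> ` F)" if "\<sigma> \<in> Sig" for \<sigma>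
    using abound[OF that] by (intro bdd_aboveI) auto
  have Phi_ge: "\<Phi> \<sigma> \<ge> a \<sigma> g0" if "\<sigma> \<in> Sig" for \<sigma>
    unfolding \<Phi>_def by (rule cSUP_upper[OF g0 bdd[OF that]])
  have nu_in: "\<nu> \<sigma> \<in> Sig" if "\<sigma> \<in> Sig" for \<sigma>
    using that by (auto simp: Sig_def \<nu>_def PiE_iff)
  have nu_nu: "\<nu> (\<nu> \<sigma>) = \<sigma>" if "\<sigma> \<in> Sig" for \<sigma>
    using that by (auto simp: Sig_def \<nu>_def PiE_iff restrict_def fun_eq_iff extensional_def)
  have bij: "bij_betw \<nu> Sig Sig"
    by (rule bij_betwI[where g=\<nu>]) (auto simp: nu_in nu_nu)
  have a_nu: "a (\<nu> \<sigma>) g = - a \<sigma> g" for \<sigma> g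
    by (simp add: a_def \<nu>_def sum_negf)
  have "(\<Sum>\<sigma>\<in>Sig. \<Phi> (\<nu> \<sigma>)) = (\<Sum>\<sigma>\<in>Sig. \<Phi> \<sigma>)"
    using sum.reindex_bij_betw[OF bij, of \<Phi>] by simp
  then have "2 * (\<Sum>\<sigma>\<in>Sig. \<Phi> \<sigma>) = (\<Sum>\<sigma>\<in>Sig. \<Phi> \<sigma> + \<Phi> (\<nu> \<sigma>))"
    by (simp add: sum.distrib)
  also have "\<dots> \<ge> 0"
  proof (intro sum_nonneg)
    fix \<sigma> assume s: "\<sigma> \<in> Sig"
    have "\<Phi> \<sigma> \<ge> a \<sigma> g0" by (rule Phi_ge[OF s])
    moreover have "\<Phi> (\<nu> \<sigma>) \<ge> - a \<sigma> g0" using Phi_ge[OF nu_in[OF s]] a_nu by simp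
    ultimately show "\<Phi> \<sigma> + \<Phi> (\<nu> \<sigma>) \<ge> 0" by simp
  qed
  finally have "(\<Sum>\<sigma>\<in>Sig. \<Phi> \<sigma>) \<ge> 0" by simp
  then show ?thesis unfolding emp_rademacher_def by (simp add: Sig_def \<Phi>_def a_def)
qed


lemma coord_indep:
  assumes pS: "prob_space S" and n: "n \<ge> 1"
  shows "prob_space.indep_vars (PiM {..<n::nat} (\<lambda>_. S)) (\<lambda>_. S) (\<lambda>i xs. xs i) {..<n}"
proof -
  have False: "n \<noteq> 0" using n by simp
  interpret P: prob_space "PiM {..<n} (\<lambda>_. S)" by (rule prob_space_PiM) (use pS in auto)
  show ?thesis
  proof (subst P.indep_vars_iff_distr_eq_PiM')
    show "{..<n} \<noteq> {}" using False by auto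
    show "(\<lambda>xs. xs i) \<in> measurable (PiM {..<n} (\<lambda>_. S)) S" if "i \<in> {..<n}" for i
      using that by (intro measurable_component_singleton) auto
    have "distr (PiM {..<n} (\<lambda>_. S)) (PiM {..<n} (\<lambda>_. S)) (\<lambda>x. \<lambda>i\<in>{..<n}. x i)
        = distr (PiM {..<n} (\<lambda>_. S)) (PiM {..<n} (\<lambda>_. S)) (\<lambda>x. x)"
      by (rule distr_cong) (auto simp: space_PiM PiE_def extensional_restrict)
    also have "\<dots> = PiM {..<n} (\<lambda>_. S)" by (rule distr_id)
    also have "\<dots> = PiM {..<n} (\<lambda>i. distr (PiM {..<n} (\<lambda>_. S)) S (\<lambda>xs. xs i))"
      by (rule PiM_cong) (auto simp: pS intro!: distr_PiM_component[symmetric])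
    finally show "distr (PiM {..<n} (\<lambda>_. S)) (PiM {..<n} (\<lambda>_. S)) (\<lambda>x. \<lambda>i\<in>{..<n}. x i)
        = PiM {..<n} (\<lambda>i. distr (PiM {..<n} (\<lambda>_. S)) S (\<lambda>xs. xs i))" .
  qed
qed

lemma hoeffding_sample:
  fixes l :: "'a \<Rightarrow> real"
  assumes pS: "prob_space S" and lm: "l \<in> borel_measurable S"
    and lr: "\<And>x. x \<in> space S \<Longrightarrow> l x \<in> {0..1}"
    and n: "n \<ge> 1" and d: "0 < \<delta>" "\<delta> < 1"
  shows "\<exists>A \<in> sets (PiM {..<n} (\<lambda>_. S)). measure (PiM {..<n} (\<lambda>_. S)) A \<ge> 1 - \<delta> \<and>
     (\<forall>xs\<in>A. (\<integral>x. l x \<partial>S) \<le> (\<Sum>i<n. l (xs i)) / real n + sqrt (ln (1 / \<delta>) / (2 * real n)))"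
proof -
  define P where "P = PiM {..<n} (\<lambda>_. S)"
  interpret P: prob_space P unfolding P_def by (rule prob_space_PiM) (use pS in auto)
  have ind: "P.indep_vars (\<lambda>_. borel) (\<lambda>i xs. l (xs i)) {..<n}"
    using P.indep_vars_compose2[OF coord_indep[OF pS n, folded P_def], of "\<lambda>_. l" "\<lambda>_. borel"] lm
    by simp
  have n0: "0 < n" using n by simp
  have comp: "(\<lambda>xs. xs i) \<in> measurable P S" if "i < n" for i
    unfolding P_def using that by (intro measurable_component_singleton) auto
  have dcomp: "distr P S (\<lambda>xs. xs i) = S" if "i < n" for i
    unfolding P_def using that pS by (intro distr_PiM_component) auto
  have dX: "distr P borel (\<lambda>xs. l (xs i)) = distr S borel l" if "i < n" for i
  proof -
    have "distr P borel (\<lambda>xs. l (xs i)) = distr P borel (l \<circ> (\<lambda>xs. xs i))" by (simp add: comp_def)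
    also have "\<dots> = distr (distr P S (\<lambda>xs. xs i)) borel l" by (rule distr_distr[symmetric, OF lm comp[OF that]])
    also have "\<dots> = distr S borel l" using dcomp[OF that] by simp
    finally show ?thesis .
  qed
  have lP: "(\<lambda>xs. l (xs i)) \<in> borel_measurable P" if "i < n" for i
    using measurable_compose[OF comp[OF that] lm] .
  have spP: "xs i \<in> space S" if "xs \<in> space P" "i < n" for xs i
    using measurable_space[OF comp[OF that(2)] that(1)] .
  interpret Hoeffding_ineq_iid P "{..<n}" "\<lambda>i xs. l (xs i)" "\<lambda>xs. l (xs 0)" 0 1 "P.expectation (\<lambda>xs. l (xs 0))"
  proof unfold_locales
    show "finite {..<n}" by simp
    show "P.indep_vars (\<lambda>_. borel) (\<lambda>i xs. l (xs i)) {..<n}" by (rule ind)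
    show "distr P borel (\<lambda>xs. l (xs i)) = distr P borel (\<lambda>xs. l (xs 0))" if "i \<in> {..<n}" for i
      using dX[of i] dX[of 0] that n0 by simp
    show "(\<lambda>xs. l (xs 0)) \<in> borel_measurable P" using lP[OF n0] .
    show "AE x in P. l (x 0) \<in> {0..1}" using spP[OF _ n0] lr by auto
  qed simp
  have mu: "P.expectation (\<lambda>xs. l (xs 0)) = (\<integral>x. l x \<partial>S)"
  proof -
    have "(\<integral>x. l x \<partial>S) = (\<integral>x. l x \<partial>distr P S (\<lambda>xs. xs 0))" using dcomp[OF n0] by simp
    also have "\<dots> = P.expectation (\<lambda>xs. l (xs 0))" by (rule integral_distr[OF comp[OF n0] lm])
    finally show ?thesis by simp
  qed
  define \<epsilon> where "\<epsilon> = sqrt (ln (1 / \<delta>) / (2 * real n))"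
  have lnpos: "ln (1 / \<delta>) > 0" using d by simp
  have eps0: "\<epsilon> \<ge> 0" unfolding \<epsilon>_def using lnpos by simp
  have eps2: "\<epsilon>\<^sup>2 = ln (1 / \<delta>) / (2 * real n)" unfolding \<epsilon>_def using lnpos by simp
  define Bad where "Bad = {x \<in> space P. (\<Sum>i\<in>{..<n}. l (x i)) / real (card {..<n}) \<le> P.expectation (\<lambda>xs. l (xs 0)) - \<epsilon>}"
  have pBad: "P.prob Bad \<le> exp (- 2 * real (card {..<n}) * \<epsilon>\<^sup>2 / (1 - 0)\<^sup>2)"
    unfolding Bad_def by (rule Hoeffding_ineq_le'[OF eps0]) (use n0 in auto)
  also have "\<dots> = \<delta>" using eps2 n0 d by (simp add: exp_minus field_simps)
  finally have pBad': "P.prob Bad \<le> \<delta>" .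
  have Bad_sets: "Bad \<in> P.events" unfolding Bad_def using lP by measurable
  show ?thesis
  proof (intro bexI conjI ballI)
    show "space P - Bad \<in> sets (PiM {..<n} (\<lambda>_. S))" using Bad_sets unfolding P_def by auto
    show "measure (PiM {..<n} (\<lambda>_. S)) (space P - Bad) \<ge> 1 - \<delta>"
      using P.prob_compl[OF Bad_sets] pBad' unfolding P_def by simp
    fix xs assume "xs \<in> space P - Bad"
    then have "\<not> (\<Sum>i<n. l (xs i)) / real n \<le> (\<integral>x. l x \<partial>S) - \<epsilon>"
      unfolding Bad_def mu by simp
    then show "(\<integral>x. l x \<partial>S) \<le> (\<Sum>i<n. l (xs i)) / real n + sqrt (ln (1 / \<delta>) / (2 * real n))"
      unfolding \<epsilon>_def by simp
  qed
qed


lemma feat_err_triangle: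
  fixes Zk :: "'z::euclidean_space set"
  assumes pP: "prob_space P" and sP: "sets P = sets (restrict_space borel Zk)"
    and m1: "f1 \<in> borel_measurable (restrict_space borel Zk)"
    and m2: "f2 \<in> borel_measurable (restrict_space borel Zk)"
    and m3: "f3 \<in> borel_measurable (restrict_space borel Zk)"
    and r1: "\<And>z. z \<in> Zk \<Longrightarrow> f1 z \<in> {0..1}"
    and r2: "\<And>z. z \<in> Zk \<Longrightarrow> f2 z \<in> {0..1}"
    and r3: "\<And>z. z \<in> Zk \<Longrightarrow> f3 z \<in> {0..1}"
  shows "feat_err P f1 f3 \<le> feat_err P f2 f3 + feat_err P f1 f2"
proof -
  interpret prob_space P by fact
  have sp: "space P = Zk" using sets_eq_imp_space_eq[OF sP] by (simp add: space_restrict_space)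
  have [measurable]: "f1 \<in> borel_measurable P" "f2 \<in> borel_measurable P" "f3 \<in> borel_measurable P"
    using m1 m2 m3 by (simp_all cong: measurable_cong_sets add: sP)
  have bnd: "integrable P g" if "g \<in> borel_measurable P" "\<And>x. x \<in> space P \<Longrightarrow> \<bar>g x\<bar> \<le> 2" for g :: "_ \<Rightarrow> real"
  proof -
    have "AE x in P. norm (g x) \<le> 2" using that by auto
    then show ?thesis using that(1) by (rule integrable_const_bound)
  qed
  have i1: "integrable P (\<lambda>z. \<bar>f2 z - f3 z\<bar>)"
  proof (rule bnd)
    fix x assume "x \<in> space P"
    then have "f2 x \<in> {0..1}" "f3 x \<in> {0..1}" using r2 r3 sp by auto
    then show "\<bar>\<bar>f2 x - f3 x\<bar>\<bar> \<le> 2" by auto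
  qed measurable
  have i2: "integrable P (\<lambda>z. \<bar>f1 z - f2 z\<bar>)"
  proof (rule bnd)
    fix x assume "x \<in> space P"
    then have "f1 x \<in> {0..1}" "f2 x \<in> {0..1}" using r1 r2 sp by auto
    then show "\<bar>\<bar>f1 x - f2 x\<bar>\<bar> \<le> 2" by auto
  qed measurable
  have i3: "integrable P (\<lambda>z. \<bar>f1 z - f3 z\<bar>)"
  proof (rule bnd)
    fix x assume "x \<in> space P"
    then have "f1 x \<in> {0..1}" "f3 x \<in> {0..1}" using r1 r3 sp by auto
    then show "\<bar>\<bar>f1 x - f3 x\<bar>\<bar> \<le> 2" by auto
  qed measurable
  have "feat_err P f1 f3 \<le> (\<integral>z. \<bar>f2 z - f3 z\<bar> + \<bar>f1 z - f2 z\<bar> \<partial>P)"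
    unfolding feat_err_def by (rule integral_mono[OF i3 Bochner_Integration.integrable_add[OF i1 i2]]) arith
  also have "\<dots> = feat_err P f2 f3 + feat_err P f1 f2"
    unfolding feat_err_def using i1 i2 by simp
  finally show ?thesis .
qed

lemma feat_err_sym: "feat_err P f1 f2 = feat_err P f2 f1"
  unfolding feat_err_def by (simp add: abs_minus_commute)

lemma feat_err_nonneg: "feat_err P f1 f2 \<ge> 0"
  unfolding feat_err_def by (rule Bochner_Integration.integral_nonneg) simp

theorem theorem4p1:
  fixes M :: "'x measure"                        \<comment> \<open>input space X\<close>
    and Zk :: "'z::euclidean_space set"          \<comment> \<open>feature space\<close>
    and hk :: "'x \<Rightarrow> 'z"                     \<comment> \<open>representation map\<close>
    and f :: "'x \<Rightarrow> real" and fk :: "'z \<Rightarrow> real"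
    and E :: "'e measure"                        \<comment> \<open>environment space\<close>
    and D :: "'e \<Rightarrow> 'x measure"                \<comment> \<open>family D_e\<close>
    and Pe :: "'e \<Rightarrow> real"                     \<comment> \<open>environment density Pi_e\<close>
    and m :: nat and w :: "nat \<Rightarrow> real" and es :: "nat \<Rightarrow> 'e"  \<comment> \<open>source: sum_{i<m} w_i D_{e_i}\<close>
    and H :: "('z \<Rightarrow> real) set" and L :: real and lam :: real
    and n :: nat and \<delta> :: real and h :: "'z \<Rightarrow> real"
  defines "T \<equiv> env_mixture E Pe D M"
    and "S \<equiv> finite_mixture m w es D M"
  assumes hk_meas: "hk \<in> measurable M borel"
    and hk_Zk: "\<And>x. x \<in> space M \<Longrightarrow> hk x \<in> Zk"
    and f_meas: "f \<in> borel_measurable M"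
    and f_range: "\<And>x. x \<in> space M \<Longrightarrow> f x \<in> {0..1}"
    and fk_meas: "fk \<in> borel_measurable (restrict_space borel Zk)"
    and fk_range: "\<And>z. z \<in> Zk \<Longrightarrow> fk z \<in> {0..1}"
    and fk_condexp: "\<And>A. A \<in> sets (restrict_space borel Zk) \<Longrightarrow>
        (\<integral>x\<in>hk -` A \<inter> space M. f x \<partial>S) = (\<integral>x\<in>hk -` A \<inter> space M. fk (hk x) \<partial>S)"
    and D_kernel: "D \<in> measurable E (prob_algebra M)"
    and Pe_meas: "Pe \<in> borel_measurable E"
    and Pe_nonneg: "\<And>e. e \<in> space E \<Longrightarrow> Pe e \<ge> 0"
    and Pe_density: "(\<integral>\<^sup>+ e. ennreal (Pe e) \<partial>E) = 1"
    and es_in: "\<And>i. i < m \<Longrightarrow> es i \<in> space E"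
    and w_nonneg: "\<And>i. i < m \<Longrightarrow> w i \<ge> 0"
    and w_sum: "(\<Sum>i<m. w i) = 1"
    and H_range: "\<And>g z. g \<in> H \<Longrightarrow> z \<in> Zk \<Longrightarrow> g z \<in> {0..1}"
    and H_lipschitz: "\<And>g. g \<in> H \<Longrightarrow> L-lipschitz_on Zk g"
    and lam_pos: "lam > 0"
    and lam_close: "(INF g\<in>H. feat_err (induced_dist S hk Zk) g fk
                              + feat_err (induced_dist T hk Zk) g fk) \<le> lam"
    and n_pos: "n \<ge> 1"
    and delta: "0 < \<delta>" "\<delta> < 1"
    and h_in: "h \<in> H"
  shows "\<exists>A \<in> sets (PiM {..<n} (\<lambda>_. S)).
           measure (PiM {..<n} (\<lambda>_. S)) A \<ge> 1 - \<delta> \<and>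
           (\<forall>xs\<in>A.
              ennreal (feat_err (induced_dist T hk Zk) h fk)
              \<le> ennreal ((\<Sum>i<n. \<bar>h (hk (xs i)) - f (xs i)\<bar>) / real n
                         + lam
                         + 2 * emp_rademacher ((\<lambda>g x. \<bar>g (hk x) - f x\<bar>) ` H) xs n
                         + 3 * sqrt (ln (2 / \<delta>) / (2 * real n)))
                + ennreal (2 * L) *
                  (\<Sum>i<m. ennreal (w i) *
                     (\<integral>\<^sup>+ e. ennreal (Pe e) *
                        wasserstein1 (induced_dist (D (es i)) hk Zk) (induced_dist (D e) hk Zk) \<partial>E)))"
proof -
  have m0: "m > 0" using w_sum by (cases m) auto
  have hkK: "hk \<in> measurable M (restrict_space borel Zk)"
    by (rule measurable_restrict_space2[OF _ hk_meas]) (use hk_Zk in auto)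
  have Pe_nonneg': "\<forall>e \<in> space E. Pe e \<ge> 0" and es_in': "\<forall>i<m. es i \<in> space E" and w_nonneg': "\<forall>i<m. w i \<ge> 0"
    using Pe_nonneg es_in w_nonneg by auto
  note mb = mixtures_basic[OF D_kernel Pe_meas Pe_nonneg' Pe_density es_in' w_nonneg' w_sum, folded T_def S_def]
  have sT: "sets T = sets M" and pT: "prob_space T" and sS: "sets S = sets M" and pS: "prob_space S"
    using mb(1-4) .
  have spS: "space S = space M" using sets_eq_imp_space_eq[OF sS] .
  have Hm: "g \<in> borel_measurable (restrict_space borel Zk)" if "g \<in> H" for g
    by (rule borel_measurable_continuous_on_restrict[OF lipschitz_on_continuous_on[OF H_lipschitz[OF that]]])
  have L0: "L \<ge> 0" using lipschitz_on_nonneg[OF H_lipschitz[OF h_in]] .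
  note iT = induced_int[OF sT pT hkK Hm[OF h_in] H_range[OF h_in]]
  note iS = induced_int[OF sS pS hkK Hm[OF h_in] H_range[OF h_in]]
  define l where "l x = \<bar>h (hk x) - f x\<bar>" for x
  have lm: "l \<in> borel_measurable S"
  proof -
    have "(\<lambda>x. h (hk x)) \<in> borel_measurable M" using measurable_compose[OF hkK Hm[OF h_in]] .
    then have "l \<in> borel_measurable M" unfolding l_def using f_meas by measurable
    then show ?thesis by (simp cong: measurable_cong_sets add: sS)
  qed
  have lr: "l x \<in> {0..1}" if "x \<in> space S" for x
    using that spS H_range[OF h_in hk_Zk[of x]] f_range[of x] by (auto simp: l_def)
  obtain A where A: "A \<in> sets (PiM {..<n} (\<lambda>_. S))" "measure (PiM {..<n} (\<lambda>_. S)) A \<ge> 1 - \<delta>"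
    and Ab: "\<And>xs. xs \<in> A \<Longrightarrow> (\<integral>x. l x \<partial>S) \<le> (\<Sum>i<n. l (xs i)) / real n + sqrt (ln (1 / \<delta>) / (2 * real n))"
    using hoeffding_sample[OF pS lm lr n_pos delta] by blast
  define Wt where "Wt = ennreal (2 * L) *
                  (\<Sum>i<m. ennreal (w i) *
                     (\<integral>\<^sup>+ e. ennreal (Pe e) *
                        wasserstein1 (induced_dist (D (es i)) hk Zk) (induced_dist (D e) hk Zk) \<partial>E))"
  show ?thesis
  proof (intro bexI[OF _ A(1)] conjI ballI)
    show "measure (PiM {..<n} (\<lambda>_. S)) A \<ge> 1 - \<delta>" by (rule A(2))
    fix xs assume xs: "xs \<in> A"
    have fin: "ennreal (feat_err (induced_dist T hk Zk) h fk)
              \<le> ennreal ((\<Sum>i<n. \<bar>h (hk (xs i)) - f (xs i)\<bar>) / real n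
                         + lam
                         + 2 * emp_rademacher ((\<lambda>g x. \<bar>g (hk x) - f x\<bar>) ` H) xs n
                         + 3 * sqrt (ln (2 / \<delta>) / (2 * real n)))
                + Wt"
    proof (cases "Wt = \<top>")
      case True then show ?thesis by simp
    next
      case False
      then obtain K0 where K0: "Wt = ennreal K0" "K0 \<ge> 0" by (cases Wt) auto
      have key: "feat_err (induced_dist T hk Zk) h fk - (\<integral>x. l x \<partial>S) - K0
          \<le> feat_err (induced_dist S hk Zk) g fk + feat_err (induced_dist T hk Zk) g fk" if g: "g \<in> H" for g
      proof -
        define G where "G = (\<lambda>z. \<bar>h z - g z\<bar>)"
        have Gm: "G \<in> borel_measurable (restrict_space borel Zk)"
          unfolding G_def using Hm[OF h_in] Hm[OF g] by measurable
        have Gr: "G z \<in> {0..1}" if "z \<in> Zk" for z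
          using H_range[OF h_in that] H_range[OF g that] by (auto simp: G_def)
        have Gl: "(2 * L)-lipschitz_on Zk G"
        proof (rule lipschitz_onI)
          fix x y assume xy: "x \<in> Zk" "y \<in> Zk"
          have "\<bar>h x - h y\<bar> \<le> L * dist x y" using lipschitz_onD[OF H_lipschitz[OF h_in] xy] by (simp add: dist_real_def)
          moreover have "\<bar>g x - g y\<bar> \<le> L * dist x y" using lipschitz_onD[OF H_lipschitz[OF g] xy] by (simp add: dist_real_def)
          ultimately show "dist (G x) (G y) \<le> 2 * L * dist x y" by (simp add: G_def dist_real_def; linarith)
        qed (use L0 in simp)
        have W0: "ennreal (integral\<^sup>L (induced_dist T hk Zk) G) \<le> ennreal (integral\<^sup>L (induced_dist S hk Zk) G) + Wt"
          unfolding T_def S_def Wt_def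
          by (rule mixture_W[OF D_kernel Pe_meas _ Pe_density _ _ w_sum hkK Gm Gr Gl]) (auto intro: Pe_nonneg es_in w_nonneg)
        have eT: "integral\<^sup>L (induced_dist T hk Zk) G = feat_err (induced_dist T hk Zk) h g" by (simp add: feat_err_def G_def)
        have eS: "integral\<^sup>L (induced_dist S hk Zk) G = feat_err (induced_dist S hk Zk) h g" by (simp add: feat_err_def G_def)
        have W1: "feat_err (induced_dist T hk Zk) h g \<le> feat_err (induced_dist S hk Zk) h g + K0"
        proof -
          have nn: "0 \<le> feat_err (induced_dist S hk Zk) h g" by (rule feat_err_nonneg)
          have "ennreal (feat_err (induced_dist T hk Zk) h g) \<le> ennreal (feat_err (induced_dist S hk Zk) h g) + ennreal K0"
            using W0 K0 by (simp add: eT eS)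
          also have "\<dots> = ennreal (feat_err (induced_dist S hk Zk) h g + K0)"
            by (rule ennreal_plus[symmetric]) (use nn K0 in auto)
          finally show ?thesis using ennreal_le_iff[of "feat_err (induced_dist S hk Zk) h g + K0"] nn K0 by auto
        qed
        have tT: "feat_err (induced_dist T hk Zk) h fk \<le> feat_err (induced_dist T hk Zk) g fk + feat_err (induced_dist T hk Zk) h g"
          by (rule feat_err_triangle[OF iT(3,4) Hm[OF h_in] Hm[OF g] fk_meas H_range[OF h_in] H_range[OF g] fk_range])
        have tS: "feat_err (induced_dist S hk Zk) h g \<le> feat_err (induced_dist S hk Zk) fk g + feat_err (induced_dist S hk Zk) h fk"
          by (rule feat_err_triangle[OF iS(3,4) Hm[OF h_in] fk_meas Hm[OF g] H_range[OF h_in] fk_range H_range[OF g]])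
        have ce: "feat_err (induced_dist S hk Zk) h fk \<le> (\<integral>x. l x \<partial>S)"
          unfolding l_def
          by (rule condexp_bound[OF pS sS hkK f_meas f_range fk_meas fk_range Hm[OF h_in] H_range[OF h_in] hk_Zk fk_condexp])
        show ?thesis using W1 tT tS ce feat_err_sym[of "induced_dist S hk Zk" fk g] by linarith
      qed
      have "feat_err (induced_dist T hk Zk) h fk - (\<integral>x. l x \<partial>S) - K0
          \<le> (INF g\<in>H. feat_err (induced_dist S hk Zk) g fk + feat_err (induced_dist T hk Zk) g fk)"
        using h_in key by (intro cINF_greatest) auto
      then have main: "feat_err (induced_dist T hk Zk) h fk \<le> (\<integral>x. l x \<partial>S) + lam + K0"
        using lam_close unfolding T_def S_def by linarith
      have xsS: "xs i \<in> space M" if "i < n" for i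
      proof -
        have "xs \<in> space (PiM {..<n} (\<lambda>_. S))" using sets.sets_into_space[OF A(1)] xs by auto
        then show ?thesis using that spS by (auto simp: space_PiM PiE_iff)
      qed
      have rad: "emp_rademacher ((\<lambda>g x. \<bar>g (hk x) - f x\<bar>) ` H) xs n \<ge> 0"
      proof (rule emp_rademacher_nonneg[of "\<lambda>x. \<bar>h (hk x) - f x\<bar>"])
        show "(\<lambda>x. \<bar>h (hk x) - f x\<bar>) \<in> (\<lambda>g x. \<bar>g (hk x) - f x\<bar>) ` H" using h_in by auto
        show "n \<ge> 1" by (rule n_pos)
        fix g i assume g: "g \<in> (\<lambda>g x. \<bar>g (hk x) - f x\<bar>) ` H" and i: "i < n"
        then obtain g' where g': "g' \<in> H" "g = (\<lambda>x. \<bar>g' (hk x) - f x\<bar>)" by auto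
        show "\<bar>g (xs i)\<bar> \<le> 1"
          using H_range[OF g'(1) hk_Zk[OF xsS[OF i]]] f_range[OF xsS[OF i]] g'(2) by auto
      qed
      have sq: "sqrt (ln (1 / \<delta>) / (2 * real n)) \<le> 3 * sqrt (ln (2 / \<delta>) / (2 * real n))"
      proof -
        have "ln (1 / \<delta>) \<le> ln (2 / \<delta>)" using delta by (simp add: divide_right_mono)
        then have "sqrt (ln (1 / \<delta>) / (2 * real n)) \<le> sqrt (ln (2 / \<delta>) / (2 * real n))"
          using n_pos by (intro real_sqrt_le_mono divide_right_mono) auto
        moreover have "ln (2 / \<delta>) \<ge> 0" using delta by simp
        then have "sqrt (ln (2 / \<delta>) / (2 * real n)) \<ge> 0" by simp
        ultimately show ?thesis by linarith
      qed
      define X where "X = (\<Sum>i<n. \<bar>h (hk (xs i)) - f (xs i)\<bar>) / real n + lam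
                         + 2 * emp_rademacher ((\<lambda>g x. \<bar>g (hk x) - f x\<bar>) ` H) xs n
                         + 3 * sqrt (ln (2 / \<delta>) / (2 * real n))"
      have le: "feat_err (induced_dist T hk Zk) h fk \<le> X + K0"
        using main Ab[OF xs] rad sq unfolding X_def l_def by linarith
      have X0: "X \<ge> 0"
      proof -
        have "(\<Sum>i<n. \<bar>h (hk (xs i)) - f (xs i)\<bar>) / real n \<ge> 0" by (simp add: sum_nonneg)
        moreover have "sqrt (ln (2 / \<delta>) / (2 * real n)) \<ge> 0" using delta by simp
        ultimately show ?thesis unfolding X_def using rad lam_pos by linarith
      qed
      have "ennreal (feat_err (induced_dist T hk Zk) h fk) \<le> ennreal (X + K0)"
        using le by (rule ennreal_leI)
      also have "\<dots> = ennreal X + Wt" using X0 K0 by (simp add: ennreal_plus)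
      finally show ?thesis unfolding X_def .
    qed
    then show "ennreal (feat_err (induced_dist T hk Zk) h fk) \<le> ennreal ((\<Sum>i<n. \<bar>h (hk (xs i)) - f (xs i)\<bar>) / real n + lam + 2 * emp_rademacher ((\<lambda>g x. \<bar>g (hk x) - f x\<bar>) ` H) xs n + 3 * sqrt (ln (2 / \<delta>) / (2 * real n))) + ennreal (2 * L) * (\<Sum>i<m. ennreal (w i) * (\<integral>\<^sup>+ e. ennreal (Pe e) * wasserstein1 (induced_dist (D (es i)) hk Zk) (induced_dist (D e) hk Zk) \<partial>E))"
      unfolding Wt_def .
  qed
qed

end
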